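(* For every positive integer $n$, $\mathrm{Sort}_n(\mathrm{SC}_{\underline{23}1})=\mathrm{Av}_n(1324,\mu_{2413})$, the set of permutations in $\mathfrak S_n$ that avoid the classical pattern $1324$ and the mesh pattern $\mu_{2413}=(2413,\{(1,0),(2,1),(2,2)\})$.
   Context: $\mathfrak S_n$ is the set of permutations of $\{1,\dots,n\}$. A vincular pattern is a permutation with some entries underlined; a sequence contains it if it has a subsequence with the same relative order in which entries corresponding to adjacent underlined entries occupy consecutive positions. An occurrence of $\underline{23}1$ is $a_j a_{j+1} a_l$ with $l>j+1$ and $a_l<a_j<a_{j+1}$. A mesh pattern is a pair $(\sigma,A)$ with $\sigma\in\mathfrak S_k$ and $A\subseteq\{0,\dots,k\}^2$. A permutation $\tau\in\mathfrak S_n$ contains $(\sigma,A)$ if there are positions $i_1<\dots<i_k$ with $\tau_{i_1}\cdots\tau_{i_k}$ order-isomorphic to $\sigma$ such that, writing $i_0=0$, $i_{k+1}=n+1$, and $v_0=0<v_1<\dots<v_k<v_{k+1}=n+1$ for the sorted values $\{\tau_{i_1},\dots,\tau_{i_k}\}$ together with $0,n+1$, no point $(j,\tau_j)$ lies in the open box $i_a<j<i_{a+1}$, $v_b<\tau_j<v_{b+1}$ for any $(a,b)\in A$. Otherwise $\tau$ avoids it. For a pattern $\sigma$, the map $\mathrm{SC}_\sigma$ acts on $\tau$: read entries left to right; when the next entry $x$ is read, if pushing $x$ yields a stack whose entries read top to bottom (stack adjacency = consecutive positions) avoid $\sigma$, push $x$; otherwise pop the top stack entry to the output and repeat. At the end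 pop all remaining entries; the output is $\mathrm{SC}_\sigma(\tau)$. West's stack-sorting map is $s=\mathrm{SC}_{21}$. $\mathrm{Sort}_n(\mathrm{SC}_\sigma)=\{\tau\in\mathfrak S_n : s(\mathrm{SC}_\sigma(\tau))=12\cdots n\}$. *)

theory Defs
  imports Main
begin

definition perms :: "nat \<Rightarrow> nat list set" where
  "perms n = {xs. distinct xs \<and> set xs = {1..n}}"

definition occurrence :: "nat list \<Rightarrow> nat list \<Rightarrow> nat list \<Rightarrow> bool" where
  "occurrence sigma tau idx \<longleftrightarrow>
     sorted_wrt (<) idx \<and> length idx = length sigma \<and>
     (\<forall>i\<in>set idx. i < length tau) \<and>
     (\<forall>a < length sigma. \<forall>b < length sigma.
        (tau ! (idx ! a) < tau ! (idx ! b)) \<longleftrightarrow> (sigma ! a < sigma ! b))"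

definition contains :: "nat list \<Rightarrow> nat list \<Rightarrow> bool" where
  "contains sigma tau \<longleftrightarrow> (\<exists>idx. occurrence sigma tau idx)"

text \<open>Vincular pattern 23-1 with 2,3 underlined (adjacent): a_j a_{j+1} a_l, l > j+1,
  a_l < a_j < a_{j+1}.\<close>
definition contains_23_1 :: "nat list \<Rightarrow> bool" where
  "contains_23_1 s \<longleftrightarrow>
     (\<exists>j l. j + 1 < l \<and> l < length s \<and> s ! l < s ! j \<and> s ! j < s ! (j + 1))"

text \<open>Mesh pattern containment, with 1-based positions/values as in the paper:
  I a = i_a (i_0 = 0, i_{k+1} = n+1), V b = v_b (v_0 = 0, v_{k+1} = n+1).\<close>
definition mesh_contains :: "nat list \<Rightarrow> (nat \<times> nat) set \<Rightarrow> nat list \<Rightarrow> bool" where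
  "mesh_contains sigma A tau \<longleftrightarrow>
     (\<exists>idx. occurrence sigma tau idx \<and>
        (let k = length sigma; n = length tau;
             I = (\<lambda>a. if a = 0 then 0 else if a \<le> k then idx ! (a - 1) + 1 else n + 1);
             vs = sort (map (\<lambda>i. tau ! i) idx);
             V = (\<lambda>b. if b = 0 then 0 else if b \<le> k then vs ! (b - 1) else n + 1)
         in \<forall>(a, b)\<in>A. \<not> (\<exists>j. 1 \<le> j \<and> j \<le> n \<and> I a < j \<and> j < I (a + 1) \<and>
                                V b < tau ! (j - 1) \<and> tau ! (j - 1) < V (b + 1))))"

text \<open>The stack is a list whose head is the top, so
  the stack read top to bottom is the list itself.\<close>
fun sc_insert :: "(nat list \<Rightarrow> bool) \<Rightarrow> nat \<Rightarrow> nat list \<Rightarrow> nat list \<Rightarrow> nat list \<times> nat list" where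
  "sc_insert P x [] out = ([x], out)"
| "sc_insert P x (y # st) out =
     (if \<not> P (x # y # st) then (x # y # st, out) else sc_insert P x st (out @ [y]))"

fun sc_run :: "(nat list \<Rightarrow> bool) \<Rightarrow> nat list \<Rightarrow> nat list \<Rightarrow> nat list \<Rightarrow> nat list" where
  "sc_run P [] st out = out @ st"
| "sc_run P (x # xs) st out = (case sc_insert P x st out of (st', out') \<Rightarrow> sc_run P xs st' out')"

definition SC :: "(nat list \<Rightarrow> bool) \<Rightarrow> nat list \<Rightarrow> nat list" where
  "SC P tau = sc_run P tau [] []"

definition west_s :: "nat list \<Rightarrow> nat list" where
  "west_s = SC (contains [2, 1])"

definition Sort_SC :: "nat \<Rightarrow> (nat list \<Rightarrow> bool) \<Rightarrow> nat list set" where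
  "Sort_SC n P = {tau \<in> perms n. west_s (SC P tau) = [1..<n + 1]}"

end

theory Submission
  imports Defs
begin

lemma less4: "(a::nat) < 4 \<longleftrightarrow> a = 0 \<or> a = 1 \<or> a = 2 \<or> a = 3" by auto
lemma less2: "(a::nat) < 2 \<longleftrightarrow> a = 0 \<or> a = 1" by auto
lemma all4: "(\<forall>a<(4::nat). P a) \<longleftrightarrow> P 0 \<and> P 1 \<and> P 2 \<and> P 3" unfolding less4 by auto
lemma all2: "(\<forall>a<(2::nat). P a) \<longleftrightarrow> P 0 \<and> P 1" unfolding less2 by auto
lemma all4L: "(\<forall>a<length [x1,x2,x3,x4::'a]. P a) \<longleftrightarrow> P 0 \<and> P 1 \<and> P 2 \<and> P 3"
  using all4[of P] by (simp add: numeral_eq_Suc)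
lemma all2L: "(\<forall>a<length [x1,x2::'a]. P a) \<longleftrightarrow> P 0 \<and> P 1"
  using all2[of P] by (simp add: numeral_eq_Suc)

lemma len2E: assumes "length xs = 2" obtains a b where "xs = [a,b]"
  using assms by (metis One_nat_def Suc_1 length_0_conv length_Suc_conv)
lemma len4E: assumes "length xs = 4" obtains a b c d where "xs = [a,b,c,d]"
proof -
  from assms obtain a r where "xs = a # r" "length r = 3" by (metis length_Suc_conv numeral_eq_Suc pred_numeral_simps(2) semiring_norm(26) semiring_norm(27))
  moreover from this obtain b r2 where "r = b # r2" "length r2 = 2" by (metis length_Suc_conv numeral_eq_Suc pred_numeral_simps(3))
  moreover from this obtain c d where "r2 = [c,d]" using len2E by blast
  ultimately show ?thesis using that by blast
qed

lemma contains21: "contains [2,1] s \<longleftrightarrow> (\<exists>i j. i < j \<and> j < length s \<and> s!j < s!i)"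
proof
  assume "contains [2,1] s"
  then obtain idx where o: "occurrence [2,1] s idx" unfolding contains_def by blast
  then have "length idx = 2" unfolding occurrence_def by simp
  then obtain i j where idx: "idx = [i,j]" using len2E by blast
  show "\<exists>i j. i < j \<and> j < length s \<and> s!j < s!i"
    using o unfolding idx occurrence_def all2L by (intro exI[of _ i] exI[of _ j]) auto
next
  assume "\<exists>i j. i < j \<and> j < length s \<and> s!j < s!i"
  then obtain i j where h: "i < j" "j < length s" "s!j < s!i" by blast
  have "occurrence [2,1] s [i,j]" unfolding occurrence_def all2L using h by auto
  then show "contains [2,1] s" unfolding contains_def by blast
qed

lemma contains1324: "contains [1,3,2,4] s \<longleftrightarrow> (\<exists>i j k l. i < j \<and> j < k \<and> k < l \<and> l < length s \<and>
   s!i < s!k \<and> s!k < s!j \<and> s!j < s!l)"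
proof
  assume "contains [1,3,2,4] s"
  then obtain idx where o: "occurrence [1,3,2,4] s idx" unfolding contains_def by blast
  then have "length idx = 4" unfolding occurrence_def by simp
  then obtain i j k l where idx: "idx = [i,j,k,l]" using len4E by blast
  have A: "\<forall>a<4. \<forall>b<4. (s ! (idx ! a) < s ! (idx ! b)) = ([1,3,2,4::nat] ! a < [1,3,2,4::nat] ! b)"
    using o unfolding occurrence_def by simp
  from A[rule_format, of 0 2] A[rule_format, of 2 1] A[rule_format, of 1 3]
  have "s!i < s!k" "s!k < s!j" "s!j < s!l" unfolding idx by auto
  moreover have "i < j" "j < k" "k < l" "l < length s" using o unfolding occurrence_def idx by auto
  ultimately show "\<exists>i j k l. i < j \<and> j < k \<and> k < l \<and> l < length s \<and>
   s!i < s!k \<and> s!k < s!j \<and> s!j < s!l" by blast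
next
  assume "\<exists>i j k l. i < j \<and> j < k \<and> k < l \<and> l < length s \<and>
   s!i < s!k \<and> s!k < s!j \<and> s!j < s!l"
  then obtain i j k l where h: "i < j" "j < k" "k < l" "l < length s"
   "s!i < s!k" "s!k < s!j" "s!j < s!l" by blast
  have "occurrence [1,3,2,4] s [i,j,k,l]" unfolding occurrence_def all4L using h by auto
  then show "contains [1,3,2,4] s" unfolding contains_def by blast
qed

definition meshc :: "nat list \<Rightarrow> bool" where
 "meshc s \<longleftrightarrow> (\<exists>i j k l. i < j \<and> j < k \<and> k < l \<and> l < length s \<and>
   s!k < s!i \<and> s!i < s!l \<and> s!l < s!j \<and>
   (\<forall>p. i < p \<and> p < j \<longrightarrow> \<not> (0 < s!p \<and> s!p < s!k)) \<and>
   (\<forall>p. j < p \<and> p < k \<longrightarrow> \<not> (s!k < s!p \<and> s!p < s!i) \<and> \<not> (s!i < s!p \<and> s!p < s!l)))"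

lemma mesh_eq: "mesh_contains [2,4,1,3] {(1, 0), (2, 1), (2, 2)} s \<longleftrightarrow> meshc s"
proof
  assume "mesh_contains [2,4,1,3] {(1, 0), (2, 1), (2, 2)} s"
  then obtain idx where o: "occurrence [2,4,1,3] s idx" and
    m: "(let k = length [2,4,1,3::nat]; n = length s;
             I = (\<lambda>a. if a = 0 then 0 else if a \<le> k then idx ! (a - 1) + 1 else n + 1);
             vs = sort (map (\<lambda>i. s ! i) idx);
             V = (\<lambda>b. if b = 0 then 0 else if b \<le> k then vs ! (b - 1) else n + 1)
         in \<forall>(a, b)\<in>{(1, 0), (2, 1), (2, 2)}. \<not> (\<exists>j. 1 \<le> j \<and> j \<le> n \<and> I a < j \<and> j < I (a + 1) \<and>
                                V b < s ! (j - 1) \<and> s ! (j - 1) < V (b + 1)))"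
    unfolding mesh_contains_def by blast
  then have "length idx = 4" unfolding occurrence_def by simp
  then obtain i j kk l where idx: "idx = [i,j,kk,l]" using len4E by blast
  have A: "\<forall>a<4. \<forall>b<4. (s ! (idx ! a) < s ! (idx ! b)) = ([2,4,1,3::nat] ! a < [2,4,1,3::nat] ! b)"
    using o unfolding occurrence_def by simp
  from A[rule_format, of 2 0] A[rule_format, of 0 3] A[rule_format, of 3 1]
  have v: "s!kk < s!i" "s!i < s!l" "s!l < s!j" unfolding idx by auto
  have p: "i < j" "j < kk" "kk < l" "l < length s" using o unfolding occurrence_def idx by auto
  have srt: "sort [s!i, s!j, s!kk, s!l] = [s!kk, s!i, s!l, s!j]" using v by (simp add: less_imp_le)
  have c1: "\<forall>p. i < p \<and> p < j \<longrightarrow> \<not> (0 < s!p \<and> s!p < s!kk)"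
  proof (intro allI impI)
    fix p assume "i < p \<and> p < j"
    then show "\<not> (0 < s!p \<and> s!p < s!kk)"
      using m p unfolding idx Let_def list.map srt by (auto dest!: spec[of _ "Suc p"])
  qed
  have c2: "\<forall>p. j < p \<and> p < kk \<longrightarrow> \<not> (s!kk < s!p \<and> s!p < s!i) \<and> \<not> (s!i < s!p \<and> s!p < s!l)"
  proof (intro allI impI)
    fix p assume "j < p \<and> p < kk"
    then show "\<not> (s!kk < s!p \<and> s!p < s!i) \<and> \<not> (s!i < s!p \<and> s!p < s!l)"
      using m p unfolding idx Let_def list.map srt by (auto dest!: spec[of _ "Suc p"])
  qed
  show "meshc s" unfolding meshc_def using p v c1 c2 by blast
next
  assume "meshc s"
  then obtain i j kk l where p: "i < j" "j < kk" "kk < l" "l < length s" and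
   v: "s!kk < s!i" "s!i < s!l" "s!l < s!j" and
   c1: "\<forall>p. i < p \<and> p < j \<longrightarrow> \<not> (0 < s!p \<and> s!p < s!kk)" and
   c2: "\<forall>p. j < p \<and> p < kk \<longrightarrow> \<not> (s!kk < s!p \<and> s!p < s!i) \<and> \<not> (s!i < s!p \<and> s!p < s!l)"
    unfolding meshc_def by blast
  have o: "occurrence [2,4,1,3] s [i,j,kk,l]" unfolding occurrence_def all4L using p v by auto
  have srt: "sort [s!i, s!j, s!kk, s!l] = [s!kk, s!i, s!l, s!j]" using v by (simp add: less_imp_le)
  have "(let k = length [2,4,1,3::nat]; n = length s;
             I = (\<lambda>a. if a = 0 then 0 else if a \<le> k then [i,j,kk,l] ! (a - 1) + 1 else n + 1);
             vs = sort (map (\<lambda>i. s ! i) [i,j,kk,l]);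
             V = (\<lambda>b. if b = 0 then 0 else if b \<le> k then vs ! (b - 1) else n + 1)
         in \<forall>(a, b)\<in>{(1, 0), (2, 1), (2, 2)}. \<not> (\<exists>j. 1 \<le> j \<and> j \<le> n \<and> I a < j \<and> j < I (a + 1) \<and>
                                V b < s ! (j - 1) \<and> s ! (j - 1) < V (b + 1)))"
  proof -
    have X: "False" if "Suc i < q" "q < Suc j" "0 < s!(q - Suc 0)" "s!(q - Suc 0) < s!kk" for q
      using c1[rule_format, of "q-1"] that by (cases q) auto
    have Y: "False" if "Suc j < q" "q < Suc kk" "s!kk < s!(q - Suc 0)" "s!(q - Suc 0) < s!i" for q
      using c2[rule_format, of "q-1"] that by (cases q) auto
    have Z: "False" if "Suc j < q" "q < Suc kk" "s!i < s!(q - Suc 0)" "s!(q - Suc 0) < s!l" for q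
      using c2[rule_format, of "q-1"] that by (cases q) auto
    show ?thesis unfolding Let_def list.map srt apply (simp add: numeral_eq_Suc) using X Y Z by (intro conjI allI impI notI; blast)
  qed
  then show "mesh_contains [2,4,1,3] {(1, 0), (2, 1), (2, 2)} s"
    unfolding mesh_contains_def by (intro exI[of _ "[i,j,kk,l]"] conjI o)
qed

lemma c231_cons: "contains_23_1 (x # s) \<longleftrightarrow>
   contains_23_1 s \<or> (s \<noteq> [] \<and> x < hd s \<and> (\<exists>z\<in>set (tl s). z < x))"
proof
  assume "contains_23_1 (x # s)"
  then obtain j l where h: "j + 1 < l" "l < length (x#s)" "(x#s) ! l < (x#s) ! j" "(x#s) ! j < (x#s) ! (j + 1)"
    unfolding contains_23_1_def by blast
  show "contains_23_1 s \<or> (s \<noteq> [] \<and> x < hd s \<and> (\<exists>z\<in>set (tl s). z < x))"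
  proof (cases j)
    case 0
    then obtain m where l: "l = Suc (Suc m)" using h by (cases l; cases "l - 1") auto
    have "s \<noteq> []" using h l by auto
    then have "tl s ! m \<in> set (tl s)" using h l by (cases s) auto
    moreover have "tl s ! m = (x#s) ! l" using l `s \<noteq> []` by (cases s) auto
    moreover have "hd s = (x#s) ! 1" using `s \<noteq> []` by (cases s) auto
    ultimately show ?thesis using h 0 `s \<noteq> []` by (metis One_nat_def add_0 nth_Cons_0)
  next
    case (Suc j')
    then obtain l' where l: "l = Suc l'" using h by (cases l) auto
    have "j' + 1 < l' \<and> l' < length s \<and> s ! l' < s ! j' \<and> s ! j' < s ! (j' + 1)"
      using h Suc l by auto
    then show ?thesis unfolding contains_23_1_def by blast
  qed
next
  assume "contains_23_1 s \<or> (s \<noteq> [] \<and> x < hd s \<and> (\<exists>z\<in>set (tl s). z < x))"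
  then show "contains_23_1 (x # s)"
  proof
    assume "contains_23_1 s"
    then obtain j l where h: "j + 1 < l" "l < length s" "s ! l < s ! j" "s ! j < s ! (j + 1)"
      unfolding contains_23_1_def by blast
    then have "Suc j + 1 < Suc l \<and> Suc l < length (x#s) \<and> (x#s) ! Suc l < (x#s) ! Suc j \<and> (x#s) ! Suc j < (x#s) ! (Suc j + 1)"
      by auto
    then show ?thesis unfolding contains_23_1_def by blast
  next
    assume a: "s \<noteq> [] \<and> x < hd s \<and> (\<exists>z\<in>set (tl s). z < x)"
    then obtain y r where s: "s = y # r" by (cases s) auto
    from a obtain m where m: "m < length r" "r ! m < x" unfolding s by (auto simp: in_set_conv_nth)
    have "0 + 1 < Suc (Suc m) \<and> Suc (Suc m) < length (x#s) \<and> (x#s) ! Suc (Suc m) < (x#s) ! 0 \<and> (x#s) ! 0 < (x#s) ! (0 + 1)"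
      using m a s by auto
    then show ?thesis unfolding contains_23_1_def by blast
  qed
qed

lemma c21_cons: "contains [2,1] (x # s) \<longleftrightarrow> contains [2,1] s \<or> (\<exists>z\<in>set s. z < x)"
proof
  assume "contains [2,1] (x # s)"
  then obtain i j where h: "i < j" "j < length (x#s)" "(x#s)!j < (x#s)!i" unfolding contains21 by blast
  show "contains [2,1] s \<or> (\<exists>z\<in>set s. z < x)"
  proof (cases i)
    case 0
    then obtain j' where "j = Suc j'" using h by (cases j) auto
    then show ?thesis using h 0 by auto
  next
    case (Suc i')
    then obtain j' where "j = Suc j'" using h by (cases j) auto
    then show ?thesis using h Suc unfolding contains21 by auto
  qed
next
  assume "contains [2,1] s \<or> (\<exists>z\<in>set s. z < x)"
  then show "contains [2,1] (x # s)"
  proof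
    assume "contains [2,1] s"
    then obtain i j where h: "i < j" "j < length s" "s!j < s!i" unfolding contains21 by blast
    then have "Suc i < Suc j \<and> Suc j < length (x#s) \<and> (x#s)!Suc j < (x#s)!Suc i" by auto
    then show ?thesis unfolding contains21 by blast
  next
    assume "\<exists>z\<in>set s. z < x"
    then obtain m where "m < length s" "s!m < x" by (auto simp: in_set_conv_nth)
    then have "0 < Suc m \<and> Suc m < length (x#s) \<and> (x#s)!Suc m < (x#s)!0" by auto
    then show ?thesis unfolding contains21 by blast
  qed
qed

lemma ins231: "\<not> contains_23_1 st \<Longrightarrow> sc_insert contains_23_1 x st out =
  (if \<exists>z\<in>set st. z < x then (x # dropWhile (\<lambda>y. x < y) st, out @ takeWhile (\<lambda>y. x < y) st)
   else (x # st, out))"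
proof (induction st arbitrary: out)
  case Nil
  then show ?case by simp
next
  case (Cons y st)
  have nst: "\<not> contains_23_1 st" using Cons.prems c231_cons by blast
  have P: "contains_23_1 (x # y # st) \<longleftrightarrow> x < y \<and> (\<exists>z\<in>set st. z < x)"
    using Cons.prems c231_cons[of x "y # st"] by auto
  show ?case
  proof (cases "x < y \<and> (\<exists>z\<in>set st. z < x)")
    case True
    then show ?thesis using P Cons.IH[OF nst, of "out @ [y]"] by auto
  next
    case False
    then show ?thesis using P by auto
  qed
qed

lemma ins21: "\<not> contains [2,1] st \<Longrightarrow> sc_insert (contains [2,1]) x st out =
  (x # dropWhile (\<lambda>y. y < x) st, out @ takeWhile (\<lambda>y. y < x) st)"
proof (induction st arbitrary: out)
  case Nil
  then show ?case by simp
next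
  case (Cons y st)
  have nst: "\<not> contains [2,1] st" and ge: "\<forall>z\<in>set st. y \<le> z"
    using Cons.prems c21_cons[of y st] by auto
  have P: "contains [2,1] (x # y # st) \<longleftrightarrow> y < x"
    using Cons.prems c21_cons[of x "y # st"] ge by auto
  show ?case
  proof (cases "y < x")
    case True
    then show ?thesis using P Cons.IH[OF nst, of "out @ [y]"] by auto
  next
    case False
    then show ?thesis using P by auto
  qed
qed

lemma notP_ins: "\<forall>x. \<not> P [x] \<Longrightarrow> \<not> P (fst (sc_insert P x st out))"
  by (induction P x st out rule: sc_insert.induct) auto

definition stk :: "nat list \<Rightarrow> (nat \<Rightarrow> nat) \<Rightarrow> nat \<Rightarrow> nat list" where
  "stk tau T t = map ((!) tau) (rev (filter (\<lambda>p. t \<le> T p) [0..<t]))"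
definition batch :: "nat list \<Rightarrow> (nat \<Rightarrow> nat) \<Rightarrow> nat \<Rightarrow> nat list" where
  "batch tau T s = map ((!) tau) (rev (filter (\<lambda>p. T p = s) [0..<s]))"
definition outp :: "nat list \<Rightarrow> (nat \<Rightarrow> nat) \<Rightarrow> nat \<Rightarrow> nat list" where
  "outp tau T t = concat (map (batch tau T) [0..<t])"
definition Qg :: "(nat \<Rightarrow> nat) \<Rightarrow> nat \<Rightarrow> nat list" where
  "Qg T m = concat (map (\<lambda>s. rev (filter (\<lambda>p. T p = s) [0..<s])) [0..<m])"
definition Bf :: "(nat \<Rightarrow> nat) \<Rightarrow> nat \<Rightarrow> nat \<Rightarrow> bool" where
  "Bf T p q \<longleftrightarrow> T p < T q \<or> (T p = T q \<and> q < p)"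

lemma outp_Qg: "outp tau T m = map ((!) tau) (Qg T m)"
  unfolding outp_def Qg_def batch_def by (simp add: map_concat comp_def)

lemma run_generic:
  assumes P0: "\<not> P []" and P1: "\<forall>x. \<not> P [x]"
    and Tb: "\<forall>p<length tau. p < T p \<and> T p \<le> length tau"
    and step: "\<And>t out. t < length tau \<Longrightarrow> \<not> P (stk tau T t) \<Longrightarrow>
        sc_insert P (tau!t) (stk tau T t) out = (stk tau T (Suc t), out @ batch tau T t)"
  shows "SC P tau = map ((!) tau) (Qg T (Suc (length tau)))"
proof -
  let ?n = "length tau"
  have main: "t \<le> ?n \<Longrightarrow> \<not> P (stk tau T t) \<Longrightarrow>
     sc_run P (drop t tau) (stk tau T t) (outp tau T t) = outp tau T (Suc ?n)" for t
  proof (induction "?n - t" arbitrary: t)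
    case 0
    then have t: "t = ?n" by simp
    have "filter (\<lambda>p. ?n \<le> T p) [0..<?n] = filter (\<lambda>p. T p = ?n) [0..<?n]"
      using Tb by (intro filter_cong) auto
    then have "stk tau T ?n = batch tau T ?n" unfolding stk_def batch_def by simp
    then show ?case using t unfolding outp_def by simp
  next
    case (Suc k)
    then have t: "t < ?n" by simp
    have d: "drop t tau = tau ! t # drop (Suc t) tau" using t by (simp add: Cons_nth_drop_Suc)
    have ins: "sc_insert P (tau!t) (stk tau T t) (outp tau T t) = (stk tau T (Suc t), outp tau T (Suc t))"
      using step[OF t Suc.prems(2)] unfolding outp_def by simp
    have np: "\<not> P (stk tau T (Suc t))"
      using notP_ins[OF P1, of "tau!t" "stk tau T t" "outp tau T t"] ins by simp
    have "sc_run P (drop (Suc t) tau) (stk tau T (Suc t)) (outp tau T (Suc t)) = outp tau T (Suc ?n)"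
      using Suc.hyps(1)[of "Suc t"] Suc.hyps(2) t np by simp
    then show ?case unfolding d using ins by simp
  qed
  have "sc_run P (drop 0 tau) (stk tau T 0) (outp tau T 0) = outp tau T (Suc ?n)"
    by (rule main) (auto simp: stk_def P0)
  then show ?thesis unfolding SC_def outp_Qg by (simp add: stk_def outp_def Qg_def)
qed

lemma Qg_props:
  "distinct (Qg T m) \<and> set (Qg T m) = {p. p < T p \<and> T p < m} \<and> sorted_wrt (Bf T) (Qg T m)"
proof (induction m)
  case 0
  then show ?case by (simp add: Qg_def)
next
  case (Suc m)
  have e: "Qg T (Suc m) = Qg T m @ rev (filter (\<lambda>p. T p = m) [0..<m])" unfolding Qg_def by simp
  have s2: "sorted_wrt (Bf T) (rev (filter (\<lambda>p. T p = m) [0..<m]))"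
    unfolding sorted_wrt_rev
    by (rule sorted_wrt_filter[THEN sorted_wrt_mono_rel[rotated]]) (auto simp: Bf_def)
  have sy: "set (rev (filter (\<lambda>p. T p = m) [0..<m])) = {p. p < m \<and> T p = m}" by auto
  have IHs: "set (Qg T m) = {p. p < T p \<and> T p < m}" and IHd: "distinct (Qg T m)" using Suc.IH by blast+
  have A: "\<forall>x\<in>set (Qg T m). \<forall>y\<in>set (rev (filter (\<lambda>p. T p = m) [0..<m])). Bf T x y"
    unfolding IHs sy Bf_def by simp
  have D: "distinct (Qg T m @ rev (filter (\<lambda>p. T p = m) [0..<m]))"
    using IHd unfolding distinct_append IHs sy by auto
  have S: "set (Qg T m @ rev (filter (\<lambda>p. T p = m) [0..<m])) = {p. p < T p \<and> T p < Suc m}"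
    unfolding set_append IHs sy by auto
  have W: "sorted_wrt (Bf T) (Qg T m @ rev (filter (\<lambda>p. T p = m) [0..<m]))"
    using Suc.IH s2 A unfolding sorted_wrt_append by blast
  show ?case unfolding e using D S W by blast
qed

definition Tg :: "(nat \<Rightarrow> nat \<Rightarrow> bool) \<Rightarrow> nat \<Rightarrow> nat \<Rightarrow> nat" where
  "Tg R n p = (if \<exists>t. R p t then (LEAST t. R p t) else n)"

lemma Tg_eq: assumes "R p t" "\<And>t'. R p t' \<Longrightarrow> t' = t" shows "Tg R n p = t"
proof -
  have "(LEAST t. R p t) = t"
  proof (rule Least_equality[where P="\<lambda>t. R p t", OF assms(1)])
    fix y assume "R p y" then have "y = t" by (rule assms(2)) then show "t \<le> y" by simp
  qed
  then show ?thesis using assms(1) unfolding Tg_def by (metis (mono_tags))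
qed

lemma Tg_none: "\<not> (\<exists>t. R p t) \<Longrightarrow> Tg R n p = n" unfolding Tg_def by auto

lemma Tg_cases: "(\<exists>t. R p t \<and> Tg R n p = t) \<or> (\<not> (\<exists>t. R p t) \<and> Tg R n p = n)"
proof (cases "\<exists>t. R p t")
  case True
  then have "R p (LEAST t. R p t)" by (metis LeastI)
  then show ?thesis using True unfolding Tg_def by simp
next
  case False
  then show ?thesis unfolding Tg_def by metis
qed

definition lrmin :: "nat list \<Rightarrow> nat \<Rightarrow> bool" where
  "lrmin tau p \<longleftrightarrow> (\<forall>q<p. tau!p < tau!q)"
definition pa :: "nat list \<Rightarrow> nat \<Rightarrow> nat \<Rightarrow> bool" where
  "pa tau p t \<longleftrightarrow> p < t \<and> t < length tau \<and> tau!t < tau!p \<and> (\<forall>q. p < q \<and> q < t \<longrightarrow> tau!p < tau!q) \<and> \<not> lrmin tau t"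
definition pw :: "nat list \<Rightarrow> nat \<Rightarrow> nat \<Rightarrow> bool" where
  "pw tau p t \<longleftrightarrow> p < t \<and> t < length tau \<and> tau!p < tau!t \<and> (\<forall>q. p < q \<and> q < t \<longrightarrow> tau!q < tau!p)"
definition T1 :: "nat list \<Rightarrow> nat \<Rightarrow> nat" where "T1 tau = Tg (pa tau) (length tau)"
definition T2 :: "nat list \<Rightarrow> nat \<Rightarrow> nat" where "T2 tau = Tg (pw tau) (length tau)"

lemma pa_uniq: "pa tau p t \<Longrightarrow> pa tau p t' \<Longrightarrow> t' = t"
  unfolding pa_def by (metis less_asym nat_neq_iff)
lemma pw_uniq: "pw tau p t \<Longrightarrow> pw tau p t' \<Longrightarrow> t' = t"
  unfolding pw_def by (metis less_asym nat_neq_iff)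
lemma T1_eq: "pa tau p t \<Longrightarrow> T1 tau p = t"
  unfolding T1_def by (rule Tg_eq) (auto dest: pa_uniq)
lemma T2_eq: "pw tau p t \<Longrightarrow> T2 tau p = t"
  unfolding T2_def by (rule Tg_eq) (auto dest: pw_uniq)
lemma T1_cases: "(\<exists>t. pa tau p t \<and> T1 tau p = t) \<or> (\<not> (\<exists>t. pa tau p t) \<and> T1 tau p = length tau)"
  unfolding T1_def by (rule Tg_cases)
lemma T2_cases: "(\<exists>t. pw tau p t \<and> T2 tau p = t) \<or> (\<not> (\<exists>t. pw tau p t) \<and> T2 tau p = length tau)"
  unfolding T2_def by (rule Tg_cases)
lemma T1_bounds: "p < length tau \<Longrightarrow> p < T1 tau p \<and> T1 tau p \<le> length tau"
  using T1_cases[of tau p] unfolding pa_def by auto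
lemma T2_bounds: "p < length tau \<Longrightarrow> p < T2 tau p \<and> T2 tau p \<le> length tau"
  using T2_cases[of tau p] unfolding pw_def by auto
lemma T1_lt: "T1 tau p < length tau \<Longrightarrow> pa tau p (T1 tau p)"
  using T1_cases[of tau p] by auto
lemma T2_lt: "T2 tau p < length tau \<Longrightarrow> pw tau p (T2 tau p)"
  using T2_cases[of tau p] by auto

lemma lrmin_T1: assumes "lrmin tau p" shows "T1 tau p = length tau"
proof -
  have "\<not> pa tau p t" for t
  proof
    assume h: "pa tau p t"
    then obtain r where r: "r < t" "tau!r \<le> tau!t" unfolding pa_def lrmin_def by (auto simp: not_less)
    show False
    proof (cases "r < p")
      case True then show ?thesis using assms h r unfolding lrmin_def pa_def by force
    next
      case False
      then show ?thesis using h r unfolding pa_def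
        by (metis le_neq_implies_less less_trans not_less)
    qed
  qed
  then show ?thesis using T1_cases[of tau p] by auto
qed

lemma exists_lrmin: "q < length tau \<Longrightarrow> \<exists>q'\<le>q. lrmin tau q' \<and> tau!q' \<le> tau!q"
proof (induction q rule: less_induct)
  case (less q)
  show ?case
  proof (cases "lrmin tau q")
    case True then show ?thesis by auto
  next
    case False
    then obtain r where "r < q" "tau!r \<le> tau!q" unfolding lrmin_def by (auto simp: not_less)
    then obtain q' where "q' \<le> r" "lrmin tau q'" "tau!q' \<le> tau!r" using less.IH[of r] less.prems by auto
    then show ?thesis using \<open>r < q\<close> \<open>tau!r \<le> tau!q\<close> by (meson le_trans less_imp_le_nat)
  qed
qed

lemma TW: "sorted_wrt (>) (L::nat list) \<Longrightarrow> (\<forall>p\<in>set L. R p \<longleftrightarrow> (\<forall>q\<in>set L. p \<le> q \<longrightarrow> Q q)) \<Longrightarrow>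
  takeWhile Q L = filter R L \<and> dropWhile Q L = filter (\<lambda>p. \<not> R p) L"
proof (induction L)
  case Nil then show ?case by simp
next
  case (Cons a L)
  have lt: "\<forall>x\<in>set L. x < a" using Cons.prems(1) by simp
  have "R a \<longleftrightarrow> (\<forall>q\<in>set (a#L). a \<le> q \<longrightarrow> Q q)" using Cons.prems(2) by simp
  also have "\<dots> \<longleftrightarrow> Q a"
  proof
    assume "Q a"
    show "\<forall>q\<in>set (a#L). a \<le> q \<longrightarrow> Q q"
    proof (intro ballI impI)
      fix q assume "q \<in> set (a#L)" "a \<le> q"
      then have "q = a" using lt by (auto simp: not_le[symmetric])
      then show "Q q" using \<open>Q a\<close> by simp
    qed
  qed simp
  finally have ra: "R a \<longleftrightarrow> Q a" .
  show ?case
  proof (cases "Q a")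
    case True
    have "\<forall>p\<in>set L. R p \<longleftrightarrow> (\<forall>q\<in>set L. p \<le> q \<longrightarrow> Q q)"
      using Cons.prems True by auto
    then show ?thesis using Cons True ra by auto
  next
    case False
    have "\<forall>p\<in>set L. \<not> R p" using Cons.prems False by auto
    then show ?thesis using False ra by auto
  qed
qed

lemma step_help:
  assumes t: "t < length tau" and Tb: "\<forall>p<length tau. p < T p"
    and cond: "\<forall>p. p < t \<and> t \<le> T p \<longrightarrow> (T p = t \<longleftrightarrow> (\<forall>q. p \<le> q \<and> q < t \<and> t \<le> T q \<longrightarrow> Q (tau!q)))"
  shows "takeWhile Q (stk tau T t) = batch tau T t \<and> tau!t # dropWhile Q (stk tau T t) = stk tau T (Suc t)"
proof -
  let ?L = "rev (filter (\<lambda>p. t \<le> T p) [0..<t])"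
  have sL: "set ?L = {p. p < t \<and> t \<le> T p}" by auto
  have so: "sorted_wrt (>) ?L" unfolding sorted_wrt_rev
    by (rule sorted_wrt_filter) simp
  have c: "\<forall>p\<in>set ?L. (T p = t) \<longleftrightarrow> (\<forall>q\<in>set ?L. p \<le> q \<longrightarrow> (Q \<circ> (!) tau) q)"
    unfolding sL using cond by auto
  note tw = TW[OF so c]
  have f1: "filter (\<lambda>p. T p = t) ?L = rev (filter (\<lambda>p. T p = t) [0..<t])"
    by (simp add: rev_filter[symmetric] filter_filter) (metis order_refl)
  have f2: "filter (\<lambda>p. T p \<noteq> t) ?L = rev (filter (\<lambda>p. Suc t \<le> T p) [0..<t])"
    by (simp add: rev_filter[symmetric] filter_filter) (intro filter_cong; auto)
  have tt: "Suc t \<le> T t" using Tb t by auto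
  have "stk tau T (Suc t) = tau ! t # map ((!) tau) (rev (filter (\<lambda>p. Suc t \<le> T p) [0..<t]))"
    unfolding stk_def using tt by simp
  then show ?thesis unfolding stk_def batch_def takeWhile_map dropWhile_map
    using tw f1 f2 by (simp add: comp_def)
qed

lemma key231:
  assumes d: "distinct tau" and t: "t < length tau" and q0: "q0 < t" "t \<le> T1 tau q0" "tau!q0 < tau!t"
    and p: "p < t" "t \<le> T1 tau p"
  shows "T1 tau p = t \<longleftrightarrow> (\<forall>q. p \<le> q \<and> q < t \<and> t \<le> T1 tau q \<longrightarrow> tau!t < tau!q)"
proof
  assume "T1 tau p = t"
  then have "pa tau p t" using T1_lt t by metis
  then show "\<forall>q. p \<le> q \<and> q < t \<and> t \<le> T1 tau q \<longrightarrow> tau!t < tau!q"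
    unfolding pa_def by (metis le_neq_implies_less less_trans)
next
  assume H: "\<forall>q. p \<le> q \<and> q < t \<and> t \<le> T1 tau q \<longrightarrow> tau!t < tau!q"
  have n: "length tau = length tau" ..
  have tp: "tau!t < tau!p" using H p by auto
  have nl: "\<not> lrmin tau t" using q0 unfolding lrmin_def by auto
  have btw: "\<forall>q. p < q \<and> q < t \<longrightarrow> tau!p < tau!q"
  proof (rule ccontr)
    assume "\<not> (\<forall>q. p < q \<and> q < t \<longrightarrow> tau!p < tau!q)"
    then have ex: "\<exists>q. p < q \<and> q < t \<and> tau!q < tau!p"
      using d t by (metis less_trans nat_neq_iff nth_eq_iff_index_eq)
    define q1 where "q1 = (LEAST q. p < q \<and> q < t \<and> tau!q < tau!p)"
    have q1: "p < q1" "q1 < t" "tau!q1 < tau!p" using LeastI_ex[OF ex] unfolding q1_def by auto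
    have q1m: "\<forall>q. p < q \<and> q < q1 \<longrightarrow> tau!p < tau!q"
    proof (intro allI impI)
      fix q assume "p < q \<and> q < q1"
      then have "\<not> (tau!q < tau!p)" using not_less_Least[of q "\<lambda>q. p < q \<and> q < t \<and> tau!q < tau!p"] q1 unfolding q1_def by auto
      moreover have "tau!q \<noteq> tau!p" using d t \<open>p < q \<and> q < q1\<close> q1 by (simp add: nth_eq_iff_index_eq)
      ultimately show "tau!p < tau!q" by simp
    qed
    show False
    proof (cases "lrmin tau q1")
      case False
      then have "pa tau p q1" unfolding pa_def using q1 q1m t by auto
      then have "T1 tau p = q1" by (rule T1_eq)
      then show False using p q1 by simp
    next
      case True
      then have "T1 tau q1 = length tau" by (rule lrmin_T1)
      then have "tau!t < tau!q1" using H q1 t by auto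
      show False
      proof (cases "q0 < q1")
        case True
        then show False using \<open>lrmin tau q1\<close> q0 \<open>tau!t < tau!q1\<close> unfolding lrmin_def by force
      next
        case False
        show False
        proof (cases "q0 = q1")
          case True then show False using q0 \<open>tau!t < tau!q1\<close> by simp
        next
          case False
          then have "q1 < q0" using \<open>\<not> q0 < q1\<close> by simp
          then have "tau!t < tau!q0" using H q0 q1 by auto
          then show False using q0 by simp
        qed
      qed
    qed
  qed
  have "pa tau p t" unfolding pa_def using p t tp btw nl by auto
  then show "T1 tau p = t" by (rule T1_eq)
qed

lemma step231:
  assumes d: "distinct tau" and t: "t < length tau" and np: "\<not> contains_23_1 (stk tau (T1 tau) t)"
  shows "sc_insert contains_23_1 (tau!t) (stk tau (T1 tau) t) out = (stk tau (T1 tau) (Suc t), out @ batch tau (T1 tau) t)"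
proof -
  let ?T = "T1 tau"
  have Tb: "\<forall>p<length tau. p < ?T p" using T1_bounds by blast
  have sst: "set (stk tau ?T t) = {tau!q | q. q < t \<and> t \<le> ?T q}" unfolding stk_def by auto
  show ?thesis
  proof (cases "\<exists>z\<in>set (stk tau ?T t). z < tau!t")
    case True
    then obtain q0 where q0: "q0 < t" "t \<le> ?T q0" "tau!q0 < tau!t" unfolding sst by auto
    have "\<forall>p. p < t \<and> t \<le> ?T p \<longrightarrow> (?T p = t \<longleftrightarrow> (\<forall>q. p \<le> q \<and> q < t \<and> t \<le> ?T q \<longrightarrow> (\<lambda>y. tau!t < y) (tau!q)))"
      using key231[OF d t q0] by auto
    note sh = step_help[OF t Tb this]
    show ?thesis unfolding ins231[OF np] using True sh by simp
  next
    case False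
    have nop: "\<forall>p<t. ?T p \<noteq> t"
    proof (intro allI impI notI)
      fix p assume "p < t" "?T p = t"
      then have "pa tau p t" using T1_lt t by metis
      then obtain r where r: "r < t" "tau!r \<le> tau!t" unfolding pa_def lrmin_def by (auto simp: not_less)
      then obtain q' where q': "q' \<le> r" "lrmin tau q'" "tau!q' \<le> tau!r" using exists_lrmin[of r tau] t by auto
      have "?T q' = length tau" using q' lrmin_T1 by blast
      then have "tau!q' \<in> set (stk tau ?T t)" unfolding sst using q' r t by auto
      moreover have "tau!q' \<noteq> tau!t" using d q' r t by (simp add: nth_eq_iff_index_eq)
      ultimately show False using False q' r by auto
    qed
    have "\<forall>p. p < t \<and> t \<le> ?T p \<longrightarrow> (?T p = t \<longleftrightarrow> (\<forall>q. p \<le> q \<and> q < t \<and> t \<le> ?T q \<longrightarrow> (\<lambda>y. False) (tau!q)))"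
      using nop by auto
    note sh = step_help[OF t Tb this]
    have tf: "takeWhile (\<lambda>a. False) xs = []" for xs :: "nat list" by (cases xs) auto
    show ?thesis unfolding ins231[OF np] using False sh tf by simp
  qed
qed

lemma key21:
  assumes d: "distinct tau" and t: "t < length tau" and p: "p < t" "t \<le> T2 tau p"
  shows "T2 tau p = t \<longleftrightarrow> (\<forall>q. p \<le> q \<and> q < t \<and> t \<le> T2 tau q \<longrightarrow> tau!q < tau!t)"
proof
  assume "T2 tau p = t"
  then have "pw tau p t" using T2_lt t by metis
  then show "\<forall>q. p \<le> q \<and> q < t \<and> t \<le> T2 tau q \<longrightarrow> tau!q < tau!t"
    unfolding pw_def by (metis le_neq_implies_less less_trans)
next
  assume H: "\<forall>q. p \<le> q \<and> q < t \<and> t \<le> T2 tau q \<longrightarrow> tau!q < tau!t"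
  have tp: "tau!p < tau!t" using H p by auto
  have btw: "\<forall>q. p < q \<and> q < t \<longrightarrow> tau!q < tau!p"
  proof (rule ccontr)
    assume "\<not> (\<forall>q. p < q \<and> q < t \<longrightarrow> tau!q < tau!p)"
    then have ex: "\<exists>q. p < q \<and> q < t \<and> tau!p < tau!q"
      using d t by (metis less_trans nat_neq_iff nth_eq_iff_index_eq)
    define q1 where "q1 = (LEAST q. p < q \<and> q < t \<and> tau!p < tau!q)"
    have q1: "p < q1" "q1 < t" "tau!p < tau!q1" using LeastI_ex[OF ex] unfolding q1_def by auto
    have q1m: "\<forall>q. p < q \<and> q < q1 \<longrightarrow> tau!q < tau!p"
    proof (intro allI impI)
      fix q assume "p < q \<and> q < q1"
      then have "\<not> (tau!p < tau!q)" using not_less_Least[of q "\<lambda>q. p < q \<and> q < t \<and> tau!p < tau!q"] q1 unfolding q1_def by auto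
      moreover have "tau!q \<noteq> tau!p" using d t \<open>p < q \<and> q < q1\<close> q1 by (simp add: nth_eq_iff_index_eq)
      ultimately show "tau!q < tau!p" by simp
    qed
    have "pw tau p q1" unfolding pw_def using q1 q1m t by auto
    then have "T2 tau p = q1" by (rule T2_eq)
    then show False using p q1 by simp
  qed
  have "pw tau p t" unfolding pw_def using p t tp btw by auto
  then show "T2 tau p = t" by (rule T2_eq)
qed

lemma step21:
  assumes d: "distinct tau" and t: "t < length tau" and np: "\<not> contains [2,1] (stk tau (T2 tau) t)"
  shows "sc_insert (contains [2,1]) (tau!t) (stk tau (T2 tau) t) out = (stk tau (T2 tau) (Suc t), out @ batch tau (T2 tau) t)"
proof -
  let ?T = "T2 tau"
  have Tb: "\<forall>p<length tau. p < ?T p" using T2_bounds by blast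
  have "\<forall>p. p < t \<and> t \<le> ?T p \<longrightarrow> (?T p = t \<longleftrightarrow> (\<forall>q. p \<le> q \<and> q < t \<and> t \<le> ?T q \<longrightarrow> (\<lambda>y. y < tau!t) (tau!q)))"
    using key21[OF d t] by auto
  note sh = step_help[OF t Tb this]
  show ?thesis unfolding ins21[OF np] using sh by simp
qed

lemma SC231_eq: assumes d: "distinct tau"
  shows "SC contains_23_1 tau = map ((!) tau) (Qg (T1 tau) (Suc (length tau)))"
proof (rule run_generic)
  show "\<not> contains_23_1 []" unfolding contains_23_1_def by simp
  show "\<forall>x. \<not> contains_23_1 [x]" unfolding contains_23_1_def by simp
  show "\<forall>p<length tau. p < T1 tau p \<and> T1 tau p \<le> length tau" using T1_bounds by blast
  show "sc_insert contains_23_1 (tau!t) (stk tau (T1 tau) t) out = (stk tau (T1 tau) (Suc t), out @ batch tau (T1 tau) t)"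
    if "t < length tau" "\<not> contains_23_1 (stk tau (T1 tau) t)" for t out
    using step231[OF d that] .
qed

lemma west_eq: assumes d: "distinct tau"
  shows "west_s tau = map ((!) tau) (Qg (T2 tau) (Suc (length tau)))"
  unfolding west_s_def
proof (rule run_generic)
  show "\<not> contains [2,1] []" unfolding contains21 by simp
  show "\<forall>x. \<not> contains [2,1] [x]" unfolding contains21 by simp
  show "\<forall>p<length tau. p < T2 tau p \<and> T2 tau p \<le> length tau" using T2_bounds by blast
  show "sc_insert (contains [2,1]) (tau!t) (stk tau (T2 tau) t) out = (stk tau (T2 tau) (Suc t), out @ batch tau (T2 tau) t)"
    if "t < length tau" "\<not> contains [2,1] (stk tau (T2 tau) t)" for t out
    using step21[OF d that] .
qed

definition fl :: "nat list \<Rightarrow> nat \<Rightarrow> nat \<Rightarrow> bool" where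
  "fl tau p t \<longleftrightarrow> p < t \<and> t < length tau \<and> tau!t < tau!p \<and> (\<forall>r. p < r \<and> r < t \<longrightarrow> tau!p < tau!r)"

lemma fl_exists:
  assumes d: "distinct tau" and "p < q" "q < length tau" "tau!q < tau!p"
  shows "\<exists>t. t \<le> q \<and> fl tau p t"
proof -
  have ex: "\<exists>r. p < r \<and> r < length tau \<and> tau!r < tau!p" using assms by blast
  define t where "t = (LEAST r. p < r \<and> r < length tau \<and> tau!r < tau!p)"
  have t: "p < t" "t < length tau" "tau!t < tau!p" using LeastI_ex[OF ex] unfolding t_def by auto
  have tq: "t \<le> q" unfolding t_def using assms by (intro Least_le) auto
  have "\<forall>r. p < r \<and> r < t \<longrightarrow> tau!p < tau!r"
  proof (intro allI impI)
    fix r assume r: "p < r \<and> r < t"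
    then have "\<not> (p < r \<and> r < length tau \<and> tau!r < tau!p)"
      using not_less_Least[of r "\<lambda>r. p < r \<and> r < length tau \<and> tau!r < tau!p"] unfolding t_def[symmetric] by blast
    moreover have "tau!r \<noteq> tau!p" using d r t by (simp add: nth_eq_iff_index_eq)
    ultimately show "tau!p < tau!r" using r t by auto
  qed
  then show ?thesis using t tq unfolding fl_def by auto
qed

lemma fl_pa: "fl tau p t \<Longrightarrow> \<not> lrmin tau t \<Longrightarrow> T1 tau p = t"
  by (rule T1_eq) (simp add: fl_def pa_def)

lemma fl_lrmin: assumes "fl tau p t" "lrmin tau t" shows "T1 tau p = length tau"
proof -
  have "\<not> pa tau p t'" for t'
  proof
    assume h: "pa tau p t'"
    have "t' = t" using h assms(1) unfolding pa_def fl_def by (metis less_asym nat_neq_iff)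
    then show False using h assms(2) unfolding pa_def by simp
  qed
  then show ?thesis using T1_cases[of tau p] by auto
qed

lemma T1_pa_fl: "pa tau p t \<Longrightarrow> fl tau p t \<and> \<not> lrmin tau t"
  unfolding pa_def fl_def by simp

lemma not_lrmin_lt: assumes d: "distinct tau" "t < length tau" "\<not> lrmin tau t"
  shows "\<exists>e<t. tau!e < tau!t"
proof -
  obtain e where "e < t" "tau!e \<le> tau!t" using assms unfolding lrmin_def by (auto simp: not_less)
  moreover have "tau!e \<noteq> tau!t" using d \<open>e < t\<close> by (simp add: nth_eq_iff_index_eq)
  ultimately show ?thesis by auto
qed

lemma prefix_min: "0 < j \<Longrightarrow> j \<le> length tau \<Longrightarrow> \<exists>i<j. lrmin tau i \<and> (\<forall>p<j. tau!i \<le> tau!p)"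
proof (induction j)
  case 0 then show ?case by simp
next
  case (Suc j)
  show ?case
  proof (cases "j = 0")
    case True then show ?thesis by (auto simp: lrmin_def)
  next
    case False
    then obtain i where i: "i < j" "lrmin tau i" "\<forall>p<j. tau!i \<le> tau!p" using Suc by auto
    show ?thesis
    proof (cases "tau!j < tau!i")
      case True
      have "lrmin tau j" unfolding lrmin_def using i(3) True by (auto intro: less_le_trans)
      then show ?thesis using i True by (intro exI[of _ j]) (auto simp: less_Suc_eq)
    next
      case False
      then show ?thesis using i by (intro exI[of _ i]) (auto simp: less_Suc_eq)
    qed
  qed
qed

definition has1324 :: "nat list \<Rightarrow> bool" where
  "has1324 s \<longleftrightarrow> (\<exists>i j k l. i < j \<and> j < k \<and> k < l \<and> l < length s \<and>
   s!i < s!k \<and> s!k < s!j \<and> s!j < s!l)"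

definition trip :: "nat list \<Rightarrow> bool" where
  "trip tau \<longleftrightarrow> (\<exists>a b c. a < length tau \<and> b < length tau \<and> c < length tau \<and>
     Bf (T1 tau) b c \<and> Bf (T1 tau) c a \<and> tau!a < tau!b \<and> tau!b < tau!c)"

lemma good_trip:
  assumes "a < c" "c < b" "b < length tau" "T1 tau a = length tau" "T1 tau c = length tau"
    "tau!a < tau!b" "tau!b < tau!c"
  shows "trip tau"
proof -
  have "T1 tau b \<le> length tau" using T1_bounds assms by auto
  then have "Bf (T1 tau) b c" using assms unfolding Bf_def by auto
  moreover have "Bf (T1 tau) c a" using assms unfolding Bf_def by auto
  ultimately show ?thesis unfolding trip_def using assms by (meson less_trans)
qed

lemma trip2:
  assumes "a < c" "c < length tau" "lrmin tau a" "T1 tau b < c"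
    "tau!a < tau!b" "tau!b < tau!c"
  shows "trip tau"
proof -
  have ta: "T1 tau a = length tau" using assms lrmin_T1 by blast
  have "T1 tau b < length tau" using assms by simp
  then have "pa tau b (T1 tau b)" by (rule T1_lt)
  then have b: "b < length tau" unfolding pa_def by simp
  have tc: "c < T1 tau c" "T1 tau c \<le> length tau" using T1_bounds assms by auto
  have "Bf (T1 tau) b c" using assms tc unfolding Bf_def by auto
  moreover have "Bf (T1 tau) c a" using assms ta tc unfolding Bf_def by auto
  ultimately show ?thesis unfolding trip_def using assms b by (meson less_trans)
qed

lemma from1324: assumes d: "distinct tau" and h: "has1324 tau" shows "trip tau"
proof -
  obtain i j k l where p: "i < j" "j < k" "k < l" "l < length tau" and
    v: "tau!i < tau!k" "tau!k < tau!j" "tau!j < tau!l" using h unfolding has1324_def by blast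
  obtain i' where i': "i' < j" "lrmin tau i'" "\<forall>p<j. tau!i' \<le> tau!p"
    using prefix_min[of j tau] p by auto
  have vi': "tau!i' \<le> tau!i" using i' p by auto
  obtain t where t: "t \<le> k" "fl tau j t" using fl_exists[OF d p(2) _ v(2)] p by auto
  show ?thesis
  proof (cases "lrmin tau t")
    case True
    then have "T1 tau j = length tau" using fl_lrmin t by blast
    moreover have "T1 tau i' = length tau" using lrmin_T1 i' by blast
    ultimately show ?thesis using p i' vi' v
      by (intro good_trip[of i' j k]) auto
  next
    case False
    then have "T1 tau j = t" using fl_pa t by blast
    then show ?thesis using p i' vi' v t
      by (intro trip2[of i' l tau j]) auto
  qed
qed

lemma meshloop:
  assumes d: "distinct tau"
  shows "i' < j \<and> j < k \<and> k < l \<and> l < length tau \<and> lrmin tau i' \<and> (\<forall>p<j. tau!i' \<le> tau!p) \<and>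
     tau!k < tau!i' \<and> tau!i' < tau!l \<and> tau!l < tau!j \<and>
     (\<forall>p. j < p \<and> p < k \<longrightarrow> tau!p < tau!k \<or> tau!l < tau!p) \<Longrightarrow> trip tau"
proof (induction "k - j" arbitrary: j rule: less_induct)
  case less
  note H = less.prems
  have jk: "j < k" "k < length tau" "tau!k < tau!j" using H by auto
  obtain t where t: "t \<le> k" "fl tau j t" using fl_exists[OF d jk(1) jk(2) jk(3)] by auto
  have Ti: "T1 tau i' = length tau" using lrmin_T1 H by blast
  show ?case
  proof (cases "lrmin tau t")
    case True
    then have "T1 tau j = length tau" using fl_lrmin t by blast
    then show ?thesis using H Ti by (intro good_trip[of i' j l]) auto
  next
    case False
    have tl: "t < length tau" using t unfolding fl_def by simp
    obtain e where e: "e < t" "tau!e < tau!t" using not_lrmin_lt[OF d tl False] by blast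
    have tj: "j < t" "tau!t < tau!j" "\<forall>r. j < r \<and> r < t \<longrightarrow> tau!j < tau!r" using t unfolding fl_def by auto
    have tk: "t \<noteq> k"
    proof
      assume "t = k"
      show False
      proof (cases "e < j")
        case True then show False using H e \<open>t = k\<close> by force
      next
        case False
        then have "e = j \<or> (j < e \<and> e < t)" using e by auto
        then show False using tj e by auto
      qed
    qed
    have vt: "tau!l < tau!t"
    proof -
      have "tau!t < tau!k \<or> tau!l < tau!t" using H tj t tk by auto
      moreover have "\<not> tau!t < tau!k"
      proof
        assume tlk: "tau!t < tau!k"
        show False
        proof (cases "e < j")
          case True then show False using H e tlk by force
        next
          case False
          then have "e = j \<or> (j < e \<and> e < t)" using e by auto
          then show False using tj e by auto
        qed
      qed
      ultimately show ?thesis by simp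
    qed
    have "i' < t \<and> t < k \<and> k < l \<and> l < length tau \<and> lrmin tau i' \<and> (\<forall>p<t. tau!i' \<le> tau!p) \<and>
     tau!k < tau!i' \<and> tau!i' < tau!l \<and> tau!l < tau!t \<and>
     (\<forall>p. t < p \<and> p < k \<longrightarrow> tau!p < tau!k \<or> tau!l < tau!p)"
    proof (intro conjI)
      show "\<forall>p<t. tau!i' \<le> tau!p"
      proof (intro allI impI)
        fix p assume "p < t"
        then have "p < j \<or> p = j \<or> (j < p \<and> p < t)" by auto
        then show "tau!i' \<le> tau!p" using H tj by force
      qed
    qed (use H tj t tk vt in auto)
    moreover have "k - t < k - j" using tj tk t by auto
    ultimately show ?thesis using less.hyps by blast
  qed
qed

lemma frommesh: assumes d: "distinct tau" and pos: "\<forall>x\<in>set tau. 0 < x" and h: "meshc tau"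
  shows "trip tau"
proof -
  obtain i j k l where p: "i < j" "j < k" "k < l" "l < length tau" and
    v: "tau!k < tau!i" "tau!i < tau!l" "tau!l < tau!j" and
    c1: "\<forall>p. i < p \<and> p < j \<longrightarrow> \<not> (0 < tau!p \<and> tau!p < tau!k)" and
    c2: "\<forall>p. j < p \<and> p < k \<longrightarrow> \<not> (tau!k < tau!p \<and> tau!p < tau!i) \<and> \<not> (tau!i < tau!p \<and> tau!p < tau!l)"
    using h unfolding meshc_def by blast
  obtain i' where i': "i' < j" "lrmin tau i'" "\<forall>p<j. tau!i' \<le> tau!p"
    using prefix_min[of j tau] p by auto
  have vi': "tau!i' \<le> tau!i" using i' p by auto
  have ne: "tau!i' \<noteq> tau!k" using d i' p by (simp add: nth_eq_iff_index_eq)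
  show ?thesis
  proof (cases "tau!i' < tau!k")
    case True
    have "i' \<noteq> i" using True v by auto
    moreover have "\<not> (i < i' \<and> i' < j)"
      using c1 True pos i' p by (metis less_trans nth_mem)
    ultimately have "i' < i" using i' by auto
    then have "has1324 tau" unfolding has1324_def using p v True
      by (intro exI[of _ i'] exI[of _ i] exI[of _ k] exI[of _ l]) auto
    then show ?thesis using from1324 d by blast
  next
    case False
    then have kl: "tau!k < tau!i'" using ne by simp
    have c2': "\<forall>p. j < p \<and> p < k \<longrightarrow> tau!p < tau!k \<or> tau!l < tau!p"
    proof (intro allI impI)
      fix p assume pp: "j < p \<and> p < k"
      have "tau!p \<noteq> tau!k" "tau!p \<noteq> tau!i" "tau!p \<noteq> tau!l" using d pp p by (auto simp: nth_eq_iff_index_eq)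
      then show "tau!p < tau!k \<or> tau!l < tau!p" using c2 pp by (meson linorder_neqE_nat)
    qed
    show ?thesis
      by (rule meshloop[OF d, of i' j k l]) (use p v i' vi' kl c2' in auto)
  qed
qed

lemma Bf_le: "Bf T p q \<Longrightarrow> T p \<le> T q" unfolding Bf_def by auto

lemma totrip: assumes d: "distinct tau" and h: "trip tau" shows "has1324 tau \<or> meshc tau"
proof -
  let ?n = "length tau"
  obtain a b c where abc: "a < ?n" "b < ?n" "c < ?n" and B1: "Bf (T1 tau) b c" and B2: "Bf (T1 tau) c a"
    and v: "tau!a < tau!b" "tau!b < tau!c" using h unfolding trip_def by blast
  have Tc: "T1 tau c \<le> ?n" "c < T1 tau c" using T1_bounds abc by auto
  have e_lemma: "\<exists>e<b. tau!e < tau!tb" if "pa tau b tb" for tb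
  proof -
    have tbn: "tb < ?n" "b < tb" "tau!tb < tau!b" "\<forall>r. b < r \<and> r < tb \<longrightarrow> tau!b < tau!r" "\<not> lrmin tau tb"
      using that unfolding pa_def by auto
    obtain e where e: "e < tb" "tau!e < tau!tb" using not_lrmin_lt[OF d tbn(1) tbn(5)] by blast
    have "e < b"
    proof (rule ccontr)
      assume "\<not> e < b"
      then have "e = b \<or> (b < e \<and> e < tb)" using e by auto
      then show False using tbn e by auto
    qed
    then show ?thesis using e by blast
  qed
  show ?thesis
  proof (cases "T1 tau c < ?n")
    case True
    define tc where "tc = T1 tau c"
    have pc: "pa tau c tc" using T1_lt True unfolding tc_def by metis
    have "T1 tau b < ?n" using Bf_le[OF B1] True by simp
    define tb where "tb = T1 tau b"
    have pb: "pa tau b tb" using T1_lt \<open>T1 tau b < ?n\<close> unfolding tb_def by metis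
    have tbc: "tb \<le> tc" using Bf_le[OF B1] unfolding tb_def tc_def .
    have "tb \<noteq> tc"
    proof
      assume eq: "tb = tc"
      then have "c < b" using B1 unfolding Bf_def tb_def tc_def by auto
      then show False using pc pb eq v unfolding pa_def by auto
    qed
    then have tbc': "tb < tc" using tbc by simp
    have bc: "b < c"
    proof (rule ccontr)
      assume "\<not> b < c"
      then have "c < b" using v by (metis linorder_neqE_nat order_less_irrefl)
      then show False using pc pb tbc' v unfolding pa_def by (meson less_trans not_less_iff_gr_or_eq)
    qed
    have tbc2: "tb < c"
    proof (rule ccontr)
      assume "\<not> tb < c"
      moreover have "tb \<noteq> c" using pb v unfolding pa_def by auto
      ultimately have "c < tb" by simp
      then show False using pc pb tbc' v unfolding pa_def by (meson less_trans not_less_iff_gr_or_eq)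
    qed
    obtain e where e: "e < b" "tau!e < tau!tb" using e_lemma[OF pb] by blast
    have "has1324 tau" unfolding has1324_def using e bc tbc2 pb v abc unfolding pa_def
      by (intro exI[of _ e] exI[of _ b] exI[of _ tb] exI[of _ c]) auto
    then show ?thesis by simp
  next
    case False
    then have Tcn: "T1 tau c = ?n" using Tc by simp
    have Tan: "T1 tau a = ?n" using Bf_le[OF B2] Tcn T1_bounds[OF abc(1)] by simp
    have ac: "a < c" using B2 Tcn Tan unfolding Bf_def by simp
    show ?thesis
    proof (cases "c < b")
      case True
      obtain D where D: "D \<le> b" "fl tau c D" using fl_exists[OF d True abc(2) v(2)] by blast
      have lD: "lrmin tau D"
      proof (rule ccontr)
        assume "\<not> lrmin tau D"
        then have "T1 tau c = D" using fl_pa D by blast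
        then show False using Tcn D unfolding fl_def by simp
      qed
      have Db: "D \<noteq> b"
      proof
        assume "D = b"
        then show False using lD ac True v unfolding lrmin_def by (meson less_trans not_less_iff_gr_or_eq)
      qed
      have cD: "c < D" "D < ?n" "\<forall>r. c < r \<and> r < D \<longrightarrow> tau!c < tau!r" using D unfolding fl_def by auto
      have vD: "tau!D < tau!a" using lD ac cD unfolding lrmin_def by auto
      have m1: "\<forall>p. a < p \<and> p < c \<longrightarrow> \<not> (0 < tau!p \<and> tau!p < tau!D)"
        using lD cD unfolding lrmin_def by (meson less_trans not_less_iff_gr_or_eq)
      have m2: "\<forall>p. c < p \<and> p < D \<longrightarrow> \<not> (tau!D < tau!p \<and> tau!p < tau!a) \<and> \<not> (tau!a < tau!p \<and> tau!p < tau!b)"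
        using cD v by (meson less_trans not_less_iff_gr_or_eq)
      have "D < b" using D Db by simp
      then have "a < c \<and> c < D \<and> D < b \<and> b < ?n \<and> tau!D < tau!a \<and> tau!a < tau!b \<and> tau!b < tau!c \<and>
        (\<forall>p. a < p \<and> p < c \<longrightarrow> \<not> (0 < tau!p \<and> tau!p < tau!D)) \<and>
        (\<forall>p. c < p \<and> p < D \<longrightarrow> \<not> (tau!D < tau!p \<and> tau!p < tau!a) \<and> \<not> (tau!a < tau!p \<and> tau!p < tau!b))"
        using ac cD vD v abc m1 m2 by auto
      then have "meshc tau" unfolding meshc_def by (intro exI[of _ a] exI[of _ c] exI[of _ D] exI[of _ b])
      then show ?thesis by simp
    next
      case False
      then have bc: "b < c" using v by (metis linorder_neqE_nat order_less_irrefl)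
      have "T1 tau b \<noteq> ?n"
      proof
        assume "T1 tau b = ?n"
        then have "c < b" using B1 Tcn unfolding Bf_def by simp
        then show False using bc by simp
      qed
      then have "T1 tau b < ?n" using T1_bounds[OF abc(2)] by simp
      define tb where "tb = T1 tau b"
      have pb: "pa tau b tb" using T1_lt \<open>T1 tau b < ?n\<close> unfolding tb_def by metis
      have tbc2: "tb < c"
      proof (rule ccontr)
        assume "\<not> tb < c"
        moreover have "tb \<noteq> c" using pb v unfolding pa_def by auto
        ultimately have ctb: "c < tb" by simp
        have tbn: "tb < ?n" "tau!tb < tau!c" using pb v unfolding pa_def by auto
        obtain D where D: "D \<le> tb" "fl tau c D" using fl_exists[OF d ctb tbn] by blast
        have lD: "lrmin tau D"
        proof (rule ccontr)
          assume "\<not> lrmin tau D"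
          then have "T1 tau c = D" using fl_pa D by blast
          then show False using Tcn D unfolding fl_def by simp
        qed
        have "D \<noteq> tb" using lD pb unfolding pa_def by auto
        then have "D < tb" using D by simp
        moreover have "c < D" using D unfolding fl_def by simp
        ultimately have "tau!b < tau!D" using pb bc unfolding pa_def by auto
        moreover have "tau!D < tau!a" using lD ac \<open>c < D\<close> unfolding lrmin_def by auto
        ultimately show False using v by simp
      qed
      obtain e where e: "e < b" "tau!e < tau!tb" using e_lemma[OF pb] by blast
      have "has1324 tau" unfolding has1324_def using e bc tbc2 pb v abc unfolding pa_def
        by (intro exI[of _ e] exI[of _ b] exI[of _ tb] exI[of _ c]) auto
      then show ?thesis by simp
    qed
  qed
qed

lemma Q_facts:
  assumes Tb: "\<forall>p<n. p < T p \<and> T p \<le> n"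
  shows "distinct (Qg T (Suc n)) \<and> set (Qg T (Suc n)) = {0..<n} \<and> length (Qg T (Suc n)) = n \<and>
         sorted_wrt (Bf T) (Qg T (Suc n))"
proof -
  have s: "set (Qg T (Suc n)) = {0..<n}"
  proof
    show "set (Qg T (Suc n)) \<subseteq> {0..<n}" using Qg_props[of T "Suc n"] by auto
    show "{0..<n} \<subseteq> set (Qg T (Suc n))" using Qg_props[of T "Suc n"] Tb by auto
  qed
  moreover have "distinct (Qg T (Suc n))" using Qg_props by blast
  moreover then have "length (Qg T (Suc n)) = n" using s distinct_card by fastforce
  ultimately show ?thesis using Qg_props by blast
qed

lemma Bf_irrefl: "\<not> Bf T p p" unfolding Bf_def by simp
lemma Bf_asym: "Bf T p q \<Longrightarrow> \<not> Bf T q p" unfolding Bf_def by auto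

lemma Bf_idx: assumes "sorted_wrt (Bf T) Q" "i < length Q" "j < length Q" "Bf T (Q!i) (Q!j)"
  shows "i < j"
proof (rule ccontr)
  assume "\<not> i < j"
  then have "j < i \<or> i = j" by auto
  then show False
  proof
    assume "j < i"
    then have "Bf T (Q!j) (Q!i)" using assms sorted_wrt_iff_nth_less by blast
    then show False using assms(4) Bf_asym by blast
  next
    assume "i = j" then show False using assms(4) Bf_irrefl by metis
  qed
qed

definition has231 :: "nat list \<Rightarrow> bool" where
  "has231 s \<longleftrightarrow> (\<exists>i j k. i < j \<and> j < k \<and> k < length s \<and> s!k < s!i \<and> s!i < s!j)"

lemma has231_trip: assumes d: "distinct tau"
  shows "has231 (SC contains_23_1 tau) \<longleftrightarrow> trip tau"
proof -
  let ?n = "length tau" and ?Q = "Qg (T1 tau) (Suc (length tau))"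
  have QF: "distinct ?Q" "set ?Q = {0..<?n}" "length ?Q = ?n" "sorted_wrt (Bf (T1 tau)) ?Q"
    using Q_facts[of "length tau" "T1 tau"] T1_bounds by blast+
  have SC: "SC contains_23_1 tau = map ((!) tau) ?Q" using SC231_eq[OF d] .
  have mem: "?Q ! i < ?n" if "i < ?n" for i using QF that by (metis atLeastLessThan_iff nth_mem)
  show ?thesis
  proof
    assume "has231 (SC contains_23_1 tau)"
    then obtain i j k where h: "i < j" "j < k" "k < ?n" "tau!(?Q!k) < tau!(?Q!i)" "tau!(?Q!i) < tau!(?Q!j)"
      unfolding has231_def SC using QF by auto
    have "Bf (T1 tau) (?Q!i) (?Q!j)" "Bf (T1 tau) (?Q!j) (?Q!k)"
      using QF(3,4) h sorted_wrt_iff_nth_less by (metis less_trans)+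
    then show "trip tau" unfolding trip_def using h mem
      by (intro exI[of _ "?Q!k"] exI[of _ "?Q!i"] exI[of _ "?Q!j"]) (auto intro: less_trans)
  next
    assume "trip tau"
    then obtain a b c where abc: "a < ?n" "b < ?n" "c < ?n" and B1: "Bf (T1 tau) b c" and B2: "Bf (T1 tau) c a"
      and v: "tau!a < tau!b" "tau!b < tau!c" unfolding trip_def by blast
    obtain ia where ia: "ia < ?n" "?Q!ia = a" using abc QF by (metis atLeastLessThan_iff in_set_conv_nth zero_le)
    obtain ib where ib: "ib < ?n" "?Q!ib = b" using abc QF by (metis atLeastLessThan_iff in_set_conv_nth zero_le)
    obtain ic where ic: "ic < ?n" "?Q!ic = c" using abc QF by (metis atLeastLessThan_iff in_set_conv_nth zero_le)
    have "ib < ic" using Bf_idx[OF QF(4), of ib ic] B1 ib ic QF(3) by simp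
    moreover have "ic < ia" using Bf_idx[OF QF(4), of ic ia] B2 ia ic QF(3) by simp
    ultimately show "has231 (SC contains_23_1 tau)" unfolding has231_def SC using ia ib ic v QF(3)
      by (intro exI[of _ ib] exI[of _ ic] exI[of _ ia]) auto
  qed
qed

lemma pw_exists:
  assumes d: "distinct tau" and "p < q" "q < length tau" "tau!p < tau!q"
  shows "\<exists>t. t \<le> q \<and> pw tau p t"
proof -
  have ex: "\<exists>r. p < r \<and> r < length tau \<and> tau!p < tau!r" using assms by blast
  define t where "t = (LEAST r. p < r \<and> r < length tau \<and> tau!p < tau!r)"
  have t: "p < t" "t < length tau" "tau!p < tau!t" using LeastI_ex[OF ex] unfolding t_def by auto
  have tq: "t \<le> q" unfolding t_def using assms by (intro Least_le) auto
  have "\<forall>r. p < r \<and> r < t \<longrightarrow> tau!r < tau!p"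
  proof (intro allI impI)
    fix r assume r: "p < r \<and> r < t"
    then have "\<not> (p < r \<and> r < length tau \<and> tau!p < tau!r)"
      using not_less_Least[of r "\<lambda>r. p < r \<and> r < length tau \<and> tau!p < tau!r"] unfolding t_def[symmetric] by blast
    moreover have "tau!r \<noteq> tau!p" using d r t by (simp add: nth_eq_iff_index_eq)
    ultimately show "tau!r < tau!p" using r t by auto
  qed
  then show ?thesis using t tq unfolding pw_def by auto
qed

lemma T2_le: assumes "distinct tau" "p < q" "q < length tau" "tau!p < tau!q" shows "T2 tau p \<le> q"
  using pw_exists[OF assms] T2_eq by fastforce

lemma west_char: assumes d: "distinct tau"
  shows "(\<forall>p q. p < length tau \<and> q < length tau \<and> Bf (T2 tau) p q \<longrightarrow> tau!p < tau!q) \<longleftrightarrow> \<not> has231 tau"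
proof
  assume H: "\<forall>p q. p < length tau \<and> q < length tau \<and> Bf (T2 tau) p q \<longrightarrow> tau!p < tau!q"
  show "\<not> has231 tau"
  proof
    assume "has231 tau"
    then obtain i j k where h: "i < j" "j < k" "k < length tau" "tau!k < tau!i" "tau!i < tau!j"
      unfolding has231_def by blast
    have "T2 tau i \<le> j" using T2_le[OF d h(1) _ h(5)] h by simp
    moreover have "k < T2 tau k" using T2_bounds h by auto
    ultimately have "Bf (T2 tau) i k" unfolding Bf_def using h by auto
    then show False using H[rule_format, of i k] h by auto
  qed
next
  assume N: "\<not> has231 tau"
  show "\<forall>p q. p < length tau \<and> q < length tau \<and> Bf (T2 tau) p q \<longrightarrow> tau!p < tau!q"
  proof (intro allI impI)
    fix p q assume pq: "p < length tau \<and> q < length tau \<and> Bf (T2 tau) p q"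
    show "tau!p < tau!q"
    proof (rule ccontr)
      assume "\<not> tau!p < tau!q"
      moreover have "p \<noteq> q" using pq Bf_irrefl by metis
      moreover then have "tau!p \<noteq> tau!q" using d pq by (simp add: nth_eq_iff_index_eq)
      ultimately have qp: "tau!q < tau!p" by simp
      show False
      proof (cases "p < q")
        case True
        show False
        proof (cases "T2 tau p < q")
          case True
          then have "pw tau p (T2 tau p)" using T2_lt pq by (metis less_trans)
          then have "has231 tau" unfolding has231_def pw_def using True qp pq
            by (intro exI[of _ p] exI[of _ "T2 tau p"] exI[of _ q]) auto
          then show False using N by simp
        next
          case False
          show False
          proof (cases "T2 tau p = q")
            case True
            then have "pw tau p q" using T2_lt pq by metis
            then show False using qp unfolding pw_def by simp
          next
            case False
            then have gt: "q < T2 tau p" using \<open>\<not> T2 tau p < q\<close> by simp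
            have "T2 tau q \<le> T2 tau p"
            proof (cases "T2 tau p < length tau")
              case True
              then have "pw tau p (T2 tau p)" by (rule T2_lt)
              then have "tau!q < tau!(T2 tau p)" "T2 tau p < length tau" using qp unfolding pw_def by auto
              then show ?thesis using T2_le[OF d gt] by simp
            next
              case False
              then show ?thesis using T2_bounds[of q tau] pq T2_bounds[of p tau] by simp
            qed
            then show False using pq \<open>p < q\<close> unfolding Bf_def by auto
          qed
        qed
      next
        case False
        then have "q < p" using \<open>p \<noteq> q\<close> by simp
        then have "T2 tau q \<le> p" using T2_le[OF d _ _ qp] pq by simp
        moreover have "p < T2 tau p" using T2_bounds pq by blast
        ultimately show False using pq unfolding Bf_def by auto
      qed
    qed
  qed
qed

lemma west_id: assumes d: "distinct tau" and st: "set tau = {1..length tau}"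
  shows "west_s tau = [1..<length tau + 1] \<longleftrightarrow> \<not> has231 tau"
proof -
  let ?n = "length tau" and ?Q = "Qg (T2 tau) (Suc (length tau))"
  have QF: "distinct ?Q" "set ?Q = {0..<?n}" "length ?Q = ?n" "sorted_wrt (Bf (T2 tau)) ?Q"
    using Q_facts[of "length tau" "T2 tau"] T2_bounds by blast+
  let ?W = "map ((!) tau) ?Q"
  have W: "west_s tau = ?W" using west_eq[OF d] .
  have dW: "distinct ?W" using QF d by (simp add: distinct_map inj_on_nth)
  have sW: "set ?W = {1..?n}" using QF st by (simp add: nth_image)
  have lW: "length ?W = ?n" using QF by simp
  have "?W = [1..<?n + 1] \<longleftrightarrow> sorted_wrt (<) ?W"
  proof
    assume eq: "?W = [1..<?n + 1]" show "sorted_wrt (<) ?W" unfolding eq by (rule sorted_wrt_upt)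
  next
    assume "sorted_wrt (<) ?W"
    then have srt: "sorted ?W" by (simp add: strict_sorted_iff)
    have "set [1..<?n + 1] = {1..?n}" by auto
    then have seq: "set ?W = set [1..<?n + 1]" using sW by (simp only:)
    show "?W = [1..<?n + 1]"
      by (rule sorted_distinct_set_unique[OF srt dW sorted_upt distinct_upt seq])
  qed
  also have "sorted_wrt (<) ?W \<longleftrightarrow> (\<forall>p q. p < ?n \<and> q < ?n \<and> Bf (T2 tau) p q \<longrightarrow> tau!p < tau!q)"
  proof
    assume S: "sorted_wrt (<) ?W"
    show "\<forall>p q. p < ?n \<and> q < ?n \<and> Bf (T2 tau) p q \<longrightarrow> tau!p < tau!q"
    proof (intro allI impI)
      fix p q assume pq: "p < ?n \<and> q < ?n \<and> Bf (T2 tau) p q"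
      have "p \<in> set ?Q" "q \<in> set ?Q" using pq QF(2) by auto
      then obtain ip iq where ip: "ip < length ?Q" "?Q!ip = p" and iq: "iq < length ?Q" "?Q!iq = q"
        by (metis in_set_conv_nth)
      have "ip < iq" using Bf_idx[OF QF(4) ip(1) iq(1)] pq ip iq by simp
      moreover have S': "\<forall>i j. i < j \<longrightarrow> j < length ?W \<longrightarrow> ?W!i < ?W!j"
        using S by (simp only: sorted_wrt_iff_nth_less)
      ultimately have "?W!ip < ?W!iq" using iq by (metis length_map)
      then show "tau!p < tau!q" using ip iq by simp
    qed
  next
    assume H: "\<forall>p q. p < ?n \<and> q < ?n \<and> Bf (T2 tau) p q \<longrightarrow> tau!p < tau!q"
    show "sorted_wrt (<) ?W" unfolding sorted_wrt_iff_nth_less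
    proof (intro allI impI)
      fix i j assume ij: "i < j" "j < length ?W"
      have S': "\<forall>i j. i < j \<longrightarrow> j < length ?Q \<longrightarrow> Bf (T2 tau) (?Q!i) (?Q!j)"
        using QF(4) by (simp only: sorted_wrt_iff_nth_less)
      have "Bf (T2 tau) (?Q!i) (?Q!j)" using S' ij lW QF(3) by simp
      moreover have "?Q!i < ?n" "?Q!j < ?n" using QF ij lW by (metis atLeastLessThan_iff nth_mem less_trans)+
      ultimately have "tau!(?Q!i) < tau!(?Q!j)" using H by blast
      then show "?W!i < ?W!j" using ij lW by simp
    qed
  qed
  also have "\<dots> \<longleftrightarrow> \<not> has231 tau" by (rule west_char[OF d])
  finally show ?thesis using W by simp
qed

lemma trip_iff: "distinct tau \<Longrightarrow> \<forall>x\<in>set tau. 0 < x \<Longrightarrow> trip tau \<longleftrightarrow> has1324 tau \<or> meshc tau"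
  using totrip from1324 frommesh by blast

lemma key_perm: assumes tp: "tau \<in> perms n"
  shows "west_s (SC contains_23_1 tau) = [1..<n + 1] \<longleftrightarrow>
     \<not> contains [1, 3, 2, 4] tau \<and> \<not> mesh_contains [2, 4, 1, 3] {(1, 0), (2, 1), (2, 2)} tau"
proof -
  have d: "distinct tau" and st: "set tau = {1..n}" using tp unfolding perms_def by auto
  have len: "length tau = n" using distinct_card[OF d] st by simp
  have pos: "\<forall>x\<in>set tau. 0 < x" using st by auto
  let ?Q = "Qg (T1 tau) (Suc (length tau))"
  have QF: "distinct ?Q" "set ?Q = {0..<length tau}" "length ?Q = length tau"
    using Q_facts[of "length tau" "T1 tau"] T1_bounds by blast+
  have SC: "SC contains_23_1 tau = map ((!) tau) ?Q" using SC231_eq[OF d] .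
  have dp: "distinct (SC contains_23_1 tau)" unfolding SC using QF d by (simp add: distinct_map inj_on_nth)
  have sp: "set (SC contains_23_1 tau) = {1..length (SC contains_23_1 tau)}"
    unfolding SC using QF st len by (simp add: nth_image)
  have lp: "length (SC contains_23_1 tau) = n" unfolding SC using QF len by simp
  have "west_s (SC contains_23_1 tau) = [1..<n + 1] \<longleftrightarrow> \<not> has231 (SC contains_23_1 tau)"
    using west_id[OF dp sp] lp by simp
  also have "\<dots> \<longleftrightarrow> \<not> trip tau" using has231_trip[OF d] by simp
  also have "\<dots> \<longleftrightarrow> \<not> (has1324 tau \<or> meshc tau)" using trip_iff[OF d pos] by simp
  also have "\<dots> \<longleftrightarrow> \<not> contains [1, 3, 2, 4] tau \<and> \<not> mesh_contains [2, 4, 1, 3] {(1, 0), (2, 1), (2, 2)} tau"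
    unfolding contains1324 mesh_eq has1324_def by simp
  finally show ?thesis .
qed

theorem mainTheorem9:
  fixes n :: nat
  assumes "n \<ge> 1"
  shows "Sort_SC n contains_23_1 =
    {tau \<in> perms n. \<not> contains [1, 3, 2, 4] tau \<and>
                     \<not> mesh_contains [2, 4, 1, 3] {(1, 0), (2, 1), (2, 2)} tau}"
  unfolding Sort_SC_def using key_perm by blast

end
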